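(* (Hyperdense coding and superadditivity in hypersphere theories.) Let $N\ge1$, $n=2^N-1$, and consider the bipartite hypersphere theory with joint state space $\Omega_{AB}$, effects $\mathcal E_{AB}$ and allowed local transformations the convex hull of $\{T_\mu\}$, as defined in the context. In the dense coding protocol where Alice and Bob share $\phi_{\mathbf 0}$, Alice encodes $x\in\{0,1\}^N$ by applying $T_x$ and Bob measures $\{E_y\}_{y\in\{0,1\}^N}$, one has $p(y|x)=\delta_{y,x}$. Consequently $$\chi_C(\Omega_{AB})\ge\chi_{DC}(\Omega_{AB})\ge N,$$ whereas $\chi_C(\Omega_A)=\chi_C(\Omega_B)=1$. In particular for $N\ge3$ the protocol is hyperdense ($\chi_{DC}>2\chi_C(\Omega_A)$) and the classical capacity is superadditive: $\chi_C(\Omega_{AB})>\chi_C(\Omega_A)+\chi_C(\Omega_B)$.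
   Context: The $n$-dimensional hypersphere theory has state space $\Omega_n=\{(1,r)^{\mathrm t}: r\in\mathbb R^n,\ \lVert r\rVert\le1\}$, unit effect $u=(1,\mathbf 0)^{\mathrm t}$, effects $\mathcal E=\{e:0\le e\cdot\omega\le1\ \forall\omega\in\Omega_n\}$; here $\Omega_A=\Omega_B=\Omega_n$. Bipartite states are real $2^N\times2^N$ matrices, identified with $\mathbb R^{2^N}\otimes\mathbb R^{2^N}$ via $v\otimes w=vw^{\mathrm t}$, inner product $X\cdot Y=\mathrm{Tr}(X^{\mathrm t}Y)$; $\Omega_A\otimes_{\min}\Omega_B$ is the convex hull of product states. Coordinates of $\mathbb R^{2^N}$ are indexed by $\nu\in\{0,1\}^N$, with $\nu=\mathbf 0$ the first coordinate. For $\mu\in\{0,1\}^N$, $(d_\mu)_\nu=(-1)^{\mu\cdot\nu}$ ($\mu\cdot\nu$ = inner product mod 2); $\phi_\mu=\mathrm{diag}(d_\mu)$; $\Omega_{AB}=$ convex hull of $\Omega_A\otimes_{\min}\Omega_B\cup\{\phi_\mu\}$; $\mathcal E_{AB}=\{E:0\le E\cdot\phi\le1\ \forall\phi\in\Omega_{AB}\}$; $E_\mu=2^{-N}\phi_\mu$; $T_\mu=\phi_\mu$ acting on $A$ by $\phi\mapsto T_\mu\phi$. Classical capacity $\chi_C(\Omega)$ of a state space with effect set: supremum of $I(X:Y)$ over finite message distributions $p_x$, states $\omega_x\in\Omega$ and measurements (finite families of effects summing to the unit) with $p(y|x)=e_y\cdot\omega_x$. Dense coding protocol with initial state $\phi$: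 message distribution $p_x$, allowed local transformations $T_x$ on $A$, measurement $\{E_y\}\subset\mathcal E_{AB}$, $p(y|x)=E_y\cdot(T_x\phi)$; $\chi_{DC}(\Omega_{AB})$ is the supremum of $I(X:Y)$ over all such protocols and initial states. *)

theory Defs
  imports Complex_Main "HOL-Library.Extended_Real" "HOL-Library.Function_Algebras"
begin

(* Vectors of R^D are represented as functions nat => real vanishing outside {..<D};
   D x D real matrices as functions nat => nat => real vanishing outside {..<D} x {..<D}.
   Coordinate 0 is the first coordinate (nu = 0). An index nu < 2^N is identified with
   the bit string in {0,1}^N given by its binary digits. *)

definition vsp :: "nat \<Rightarrow> (nat \<Rightarrow> real) set" where
  "vsp D = {v. \<forall>i. D \<le> i \<longrightarrow> v i = 0}"

definition msp :: "nat \<Rightarrow> (nat \<Rightarrow> nat \<Rightarrow> real) set" where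
  "msp D = {X. \<forall>i j. (D \<le> i \<or> D \<le> j) \<longrightarrow> X i j = 0}"

definition vinner :: "nat \<Rightarrow> (nat \<Rightarrow> real) \<Rightarrow> (nat \<Rightarrow> real) \<Rightarrow> real" where
  "vinner D v w = (\<Sum>i<D. v i * w i)"

definition minner :: "nat \<Rightarrow> (nat \<Rightarrow> nat \<Rightarrow> real) \<Rightarrow> (nat \<Rightarrow> nat \<Rightarrow> real) \<Rightarrow> real" where
  "minner D X Y = (\<Sum>i<D. \<Sum>j<D. X i j * Y i j)"

definition mhull :: "(nat \<Rightarrow> nat \<Rightarrow> real) set \<Rightarrow> (nat \<Rightarrow> nat \<Rightarrow> real) set" where
  "mhull S = {X. \<exists>(m::nat) (c::nat \<Rightarrow> real) Y. (\<forall>i<m. 0 \<le> c i \<and> Y i \<in> S) \<and>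
                 (\<Sum>i<m. c i) = 1 \<and> X = (\<lambda>a b. \<Sum>i<m. c i * Y i a b)}"

(* hypersphere state space Omega_n in R^D, n = D - 1: states (1, r) with ||r|| <= 1 *)
definition hyp_states :: "nat \<Rightarrow> (nat \<Rightarrow> real) set" where
  "hyp_states D = {v \<in> vsp D. v 0 = 1 \<and> (\<Sum>i\<in>{1..<D}. (v i)\<^sup>2) \<le> 1}"

definition hyp_effects :: "nat \<Rightarrow> (nat \<Rightarrow> real) set" where
  "hyp_effects D = {e \<in> vsp D. \<forall>\<omega>\<in>hyp_states D. 0 \<le> vinner D e \<omega> \<and> vinner D e \<omega> \<le> 1}"

definition unitv :: "nat \<Rightarrow> real" where
  "unitv = (\<lambda>i. if i = 0 then 1 else 0)"

definition tens :: "(nat \<Rightarrow> real) \<Rightarrow> (nat \<Rightarrow> real) \<Rightarrow> (nat \<Rightarrow> nat \<Rightarrow> real)" where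
  "tens v w = (\<lambda>i j. v i * w j)"

definition min_tensor :: "nat \<Rightarrow> (nat \<Rightarrow> nat \<Rightarrow> real) set" where
  "min_tensor D = mhull {tens v w | v w. v \<in> hyp_states D \<and> w \<in> hyp_states D}"

definition bitdot :: "nat \<Rightarrow> nat \<Rightarrow> nat \<Rightarrow> nat" where
  "bitdot N \<mu> \<nu> = (\<Sum>k<N. (\<mu> div 2^k mod 2) * (\<nu> div 2^k mod 2)) mod 2"

definition dvec :: "nat \<Rightarrow> nat \<Rightarrow> nat \<Rightarrow> real" where
  "dvec N \<mu> = (\<lambda>\<nu>. if \<nu> < 2^N then (-1) ^ bitdot N \<mu> \<nu> else 0)"

definition phi :: "nat \<Rightarrow> nat \<Rightarrow> (nat \<Rightarrow> nat \<Rightarrow> real)" where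
  "phi N \<mu> = (\<lambda>i j. if i = j then dvec N \<mu> i else 0)"

definition OmegaAB :: "nat \<Rightarrow> (nat \<Rightarrow> nat \<Rightarrow> real) set" where
  "OmegaAB N = mhull (min_tensor (2^N) \<union> {phi N \<mu> | \<mu>. \<mu> < 2^N})"

definition EffAB :: "nat \<Rightarrow> (nat \<Rightarrow> nat \<Rightarrow> real) set" where
  "EffAB N = {E \<in> msp (2^N). \<forall>\<phi>\<in>OmegaAB N. 0 \<le> minner (2^N) E \<phi> \<and> minner (2^N) E \<phi> \<le> 1}"

definition unitAB :: "nat \<Rightarrow> nat \<Rightarrow> real" where
  "unitAB = tens unitv unitv"

definition Emeas :: "nat \<Rightarrow> nat \<Rightarrow> (nat \<Rightarrow> nat \<Rightarrow> real)" where
  "Emeas N \<mu> = (\<lambda>i j. phi N \<mu> i j / 2^N)"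

(* allowed local transformations: convex hull of T_mu = phi_mu *)
definition allowedT :: "nat \<Rightarrow> (nat \<Rightarrow> nat \<Rightarrow> real) set" where
  "allowedT N = mhull {phi N \<mu> | \<mu>. \<mu> < 2^N}"

definition actA :: "nat \<Rightarrow> (nat \<Rightarrow> nat \<Rightarrow> real) \<Rightarrow> (nat \<Rightarrow> nat \<Rightarrow> real) \<Rightarrow> (nat \<Rightarrow> nat \<Rightarrow> real)" where
  "actA D T \<phi> = (\<lambda>i j. \<Sum>k<D. T i k * \<phi> k j)"

definition is_distr :: "nat \<Rightarrow> (nat \<Rightarrow> real) \<Rightarrow> bool" where
  "is_distr m p \<longleftrightarrow> (\<forall>x<m. 0 \<le> p x) \<and> (\<Sum>x<m. p x) = 1"

definition mutual_info :: "nat \<Rightarrow> nat \<Rightarrow> (nat \<Rightarrow> real) \<Rightarrow> (nat \<Rightarrow> nat \<Rightarrow> real) \<Rightarrow> real" where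
  "mutual_info m k p W =
     (\<Sum>x<m. \<Sum>y<k. if p x * W x y = 0 then 0
        else p x * W x y * log 2 (W x y / (\<Sum>x'<m. p x' * W x' y)))"

definition classical_capacity ::
  "('v \<Rightarrow> 'v \<Rightarrow> real) \<Rightarrow> 'v set \<Rightarrow> 'v set \<Rightarrow> 'v::comm_monoid_add \<Rightarrow> ereal" where
  "classical_capacity ip \<Omega> \<E> u =
     Sup {ereal (mutual_info m k p (\<lambda>x y. ip (e y) (\<omega> x))) | m k p \<omega> e.
            is_distr m p \<and> (\<forall>x<m. \<omega> x \<in> \<Omega>) \<and> (\<forall>y<k. e y \<in> \<E>) \<and> (\<Sum>y<k. e y) = u}"

definition dense_coding_capacity ::
  "('v \<Rightarrow> 'v \<Rightarrow> real) \<Rightarrow> 'v set \<Rightarrow> 'v set \<Rightarrow> 'v::comm_monoid_add \<Rightarrow> 't set \<Rightarrow> ('t \<Rightarrow> 'v \<Rightarrow> 'v) \<Rightarrow> ereal" where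
  "dense_coding_capacity ip \<Omega> \<E> u Ts act =
     Sup {ereal (mutual_info m k p (\<lambda>x y. ip (E y) (act (T x) \<phi>))) | m k p \<phi> T E.
            \<phi> \<in> \<Omega> \<and> is_distr m p \<and> (\<forall>x<m. T x \<in> Ts) \<and> (\<forall>y<k. E y \<in> \<E>) \<and> (\<Sum>y<k. E y) = u}"

definition chiC_local :: "nat \<Rightarrow> ereal" where
  "chiC_local N = classical_capacity (vinner (2^N)) (hyp_states (2^N)) (hyp_effects (2^N)) unitv"

definition chiC_AB :: "nat \<Rightarrow> ereal" where
  "chiC_AB N = classical_capacity (minner (2^N)) (OmegaAB N) (EffAB N) unitAB"

definition chiDC_AB :: "nat \<Rightarrow> ereal" where
  "chiDC_AB N = dense_coding_capacity (minner (2^N)) (OmegaAB N) (EffAB N) unitAB (allowedT N) (actA (2^N))"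

end

theory Submission
  imports Defs
begin

definition binclosed :: "(nat \<Rightarrow> nat \<Rightarrow> real) set \<Rightarrow> bool" where
  "binclosed C \<longleftrightarrow> (\<forall>X\<in>C. \<forall>Y\<in>C. \<forall>t::real. 0 \<le> t \<and> t \<le> 1 \<longrightarrow>
      (\<lambda>a b. t * X a b + (1 - t) * Y a b) \<in> C)"

lemma binclosedD: "binclosed C \<Longrightarrow> X \<in> C \<Longrightarrow> Y \<in> C \<Longrightarrow> 0 \<le> t \<Longrightarrow> t \<le> 1 \<Longrightarrow>
   (\<lambda>a b. t * X a b + (1 - t) * Y a b) \<in> C"
  unfolding binclosed_def by blast

lemma sum_split_add: "sum f {..<a + (b::nat)} = sum f {..<a} + (\<Sum>i<b. f (i + a))"
  by (induction b) (simp_all add: algebra_simps)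

lemma sum_fun_apply2: "(\<Sum>i\<in>A. f i) a b = (\<Sum>i\<in>A. f i a b)"
proof (cases "finite A")
  case True thus ?thesis by (induction A rule: finite_induct) auto
qed simp

lemma sum_fun_apply1: "(\<Sum>i\<in>A. f i) a = (\<Sum>i\<in>A. (f i a :: real))"
proof (cases "finite A")
  case True thus ?thesis by (induction A rule: finite_induct) auto
qed simp

lemma mhull_sub: "S \<subseteq> mhull S"
proof
  fix X assume "X \<in> S"
  show "X \<in> mhull S" unfolding mhull_def
    by (rule CollectI, rule exI[of _ 1], rule exI[of _ "\<lambda>_. 1"], rule exI[of _ "\<lambda>_. X"])
       (use \<open>X \<in> S\<close> in auto)
qed

lemma mhull_least_aux:
  assumes bc: "binclosed C" and SC: "S \<subseteq> C"
  shows "\<forall>c Y. (\<forall>i<(m::nat). 0 \<le> c i \<and> Y i \<in> S) \<longrightarrow> (\<Sum>i<m. c i) = 1 \<longrightarrow>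
           (\<lambda>a b. \<Sum>i<m. c i * Y i a b) \<in> C"
proof (induction m)
  case 0 show ?case by simp
next
  case (Suc m)
  show ?case
  proof (intro allI impI)
    fix c :: "nat \<Rightarrow> real" and Y assume h: "\<forall>i<Suc m. 0 \<le> c i \<and> Y i \<in> S" and s1: "(\<Sum>i<Suc m. c i) = 1"
    define s where "s = (\<Sum>i<m. c i)"
    have s0: "0 \<le> s" unfolding s_def using h by (intro sum_nonneg) auto
    have cm: "c m = 1 - s" using s1 by (simp add: s_def)
    show "(\<lambda>a b. \<Sum>i<Suc m. c i * Y i a b) \<in> C"
    proof (cases "s = 0")
      case True
      have "\<forall>i\<in>{..<m}. c i = 0" using True h unfolding s_def
        by (subst sum_nonneg_eq_0_iff[symmetric]) auto
      hence "(\<lambda>a b. \<Sum>i<Suc m. c i * Y i a b) = Y m" using cm True by (auto intro!: ext)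
      thus ?thesis using h SC by auto
    next
      case False
      hence sp: "s > 0" using s0 by simp
      have "(\<lambda>a b. \<Sum>i<m. (c i / s) * Y i a b) \<in> C"
        using Suc.IH[rule_format, of "\<lambda>i. c i / s" Y] h sp
        by (auto simp: s_def sum_divide_distrib[symmetric])
      moreover have "Y m \<in> C" using h SC by auto
      moreover have "s \<le> 1" using cm h by auto
      ultimately have "(\<lambda>a b. s * (\<Sum>i<m. (c i / s) * Y i a b) + (1 - s) * Y m a b) \<in> C"
        using binclosedD[OF bc, of "\<lambda>a b. \<Sum>i<m. (c i / s) * Y i a b" "Y m" s] s0 by simp
      moreover have "(\<lambda>a b. s * (\<Sum>i<m. (c i / s) * Y i a b) + (1 - s) * Y m a b)
          = (\<lambda>a b. \<Sum>i<Suc m. c i * Y i a b)"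
        using sp cm by (auto intro!: ext simp: sum_distrib_left)
      ultimately show ?thesis by simp
    qed
  qed
qed

lemma mhull_least: "binclosed C \<Longrightarrow> S \<subseteq> C \<Longrightarrow> mhull S \<subseteq> C"
  using mhull_least_aux unfolding mhull_def by blast

lemma binclosed_mhull: "binclosed (mhull S)"
  unfolding binclosed_def
proof (intro ballI allI impI)
  fix X Y and t :: real assume "X \<in> mhull S" "Y \<in> mhull S" and t: "0 \<le> t \<and> t \<le> 1"
  obtain m1 :: nat and c1 Y1 where
    h1: "\<forall>i<m1. 0 \<le> c1 i \<and> Y1 i \<in> S" "(\<Sum>i<m1. c1 i) = 1" "X = (\<lambda>a b. \<Sum>i<m1. c1 i * Y1 i a b)"
    using \<open>X \<in> mhull S\<close> unfolding mhull_def by blast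
  obtain m2 :: nat and c2 Y2 where h2: "\<forall>i<m2. 0 \<le> c2 i \<and> Y2 i \<in> S" "(\<Sum>i<m2. c2 i) = 1" "Y = (\<lambda>a b. \<Sum>i<m2. c2 i * Y2 i a b)"
    using \<open>Y \<in> mhull S\<close> unfolding mhull_def by blast
  define c where "c i = (if i < m1 then t * c1 i else (1 - t) * c2 (i - m1))" for i
  define Z where "Z i = (if i < m1 then Y1 i else Y2 (i - m1))" for i
  have "\<forall>i<m1 + m2. 0 \<le> c i \<and> Z i \<in> S" using h1 h2 t by (auto simp: c_def Z_def)
  moreover have "(\<Sum>i<m1 + m2. c i) = 1"
    using h1 h2 t by (simp add: sum_split_add c_def Z_def sum_distrib_left[symmetric])
  moreover have "(\<lambda>a b. t * X a b + (1 - t) * Y a b) = (\<lambda>a b. \<Sum>i<m1+m2. c i * Z i a b)"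
    using h1 h2 by (auto intro!: ext simp: sum_split_add c_def Z_def sum_distrib_left mult.assoc)
  ultimately show "(\<lambda>a b. t * X a b + (1 - t) * Y a b) \<in> mhull S"
    unfolding mhull_def by blast
qed

lemma mhull_idem: "mhull (mhull S) \<subseteq> mhull S"
  by (rule mhull_least[OF binclosed_mhull subset_refl])

lemma sgn_prod: "(-1::real) ^ bitdot N \<mu> \<nu> =
   (\<Prod>k<N. if odd (\<mu> div 2^k) \<and> odd (\<nu> div 2^k) then -1 else 1)"
proof -
  have "(-1::real) ^ bitdot N \<mu> \<nu> = (-1) ^ (\<Sum>k<N. (\<mu> div 2^k mod 2) * (\<nu> div 2^k mod 2))"
    unfolding bitdot_def by (simp add: minus_one_power_iff)
  also have "\<dots> = (\<Prod>k<N. (-1) ^ ((\<mu> div 2^k mod 2) * (\<nu> div 2^k mod 2)))"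
    by (rule power_sum)
  also have "\<dots> = (\<Prod>k<N. if odd (\<mu> div 2^k) \<and> odd (\<nu> div 2^k) then -1 else 1)"
    by (rule prod.cong) (auto simp: odd_iff_mod_2_eq_one even_iff_mod_2_eq_zero)
  finally show ?thesis .
qed

lemma div_shift_odd:
  fixes \<nu> :: nat
  assumes "k < N"
  shows "odd ((\<nu> + 2^N) div 2^k) \<longleftrightarrow> odd (\<nu> div 2^k)"
proof -
  have "(2::nat)^N = 2^k * 2^(N-k)" using assms by (simp add: power_add[symmetric])
  hence "(\<nu> + 2^N) div 2^k = \<nu> div 2^k + 2^(N-k)" by simp
  moreover have "even ((2::nat)^(N-k))" using assms by simp
  ultimately show ?thesis by simp
qed

lemma orth:
  "(\<Sum>\<nu>\<in>{..<(2::nat)^N}. \<Prod>k<N. if P k \<and> odd (\<nu> div 2^k) then -1 else (1::real)) =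
     (if \<forall>k<N. \<not> P k then 2^N else 0)"
proof (induction N)
  case 0 show ?case by simp
next
  case (Suc N)
  define F where "F \<nu> = (\<Prod>k<N. if P k \<and> odd (\<nu> div 2^k) then -1 else (1::real))" for \<nu> :: nat
  have lo: "(\<Prod>k<Suc N. if P k \<and> odd (\<nu> div 2^k) then -1 else (1::real)) = F \<nu>"
    if "\<nu> < 2^N" for \<nu> :: nat
    using that by (simp add: F_def)
  have hi: "(\<Prod>k<Suc N. if P k \<and> odd ((\<nu> + 2^N) div 2^k) then -1 else (1::real)) =
       F \<nu> * (if P N then -1 else 1)"
    if "\<nu> < 2^N" for \<nu> :: nat
  proof -
    have "(\<nu> + 2^N) div 2^N = 1" using that by simp
    moreover have "(\<Prod>k<N. if P k \<and> odd ((\<nu> + 2^N) div 2^k) then -1 else (1::real)) = F \<nu>"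
      unfolding F_def by (rule prod.cong) (auto simp: div_shift_odd)
    ultimately show ?thesis by simp
  qed
  have "(\<Sum>\<nu>\<in>{..<(2::nat)^Suc N}. \<Prod>k<Suc N. if P k \<and> odd (\<nu> div 2^k) then -1 else (1::real))
      = (\<Sum>\<nu>\<in>{..<(2::nat)^N}. \<Prod>k<Suc N. if P k \<and> odd (\<nu> div 2^k) then -1 else (1::real))
        + (\<Sum>\<nu>\<in>{..<(2::nat)^N}. \<Prod>k<Suc N. if P k \<and> odd ((\<nu> + 2^N) div 2^k) then -1 else (1::real))"
    unfolding power_Suc mult_2 by (rule sum_split_add)
  also have "\<dots> = (\<Sum>\<nu>\<in>{..<(2::nat)^N}. F \<nu>) + (\<Sum>\<nu>\<in>{..<(2::nat)^N}. F \<nu>) * (if P N then -1 else 1)"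
  proof -
    have e1: "(\<Sum>\<nu>\<in>{..<(2::nat)^N}. \<Prod>k<Suc N. if P k \<and> odd (\<nu> div 2^k) then -1 else (1::real)) = (\<Sum>\<nu>\<in>{..<(2::nat)^N}. F \<nu>)"
      apply (rule sum.cong[OF refl]) apply (rule lo) apply simp done
    have e2: "(\<Sum>\<nu>\<in>{..<(2::nat)^N}. \<Prod>k<Suc N. if P k \<and> odd ((\<nu> + 2^N) div 2^k) then -1 else (1::real)) = (\<Sum>\<nu>\<in>{..<(2::nat)^N}. F \<nu> * (if P N then -1 else 1))"
      apply (rule sum.cong[OF refl]) apply (rule hi) apply simp done
    show ?thesis unfolding e1 e2 by (simp only: sum_distrib_right)
  qed
  also have "(\<Sum>\<nu>\<in>{..<(2::nat)^N}. F \<nu>) = (if \<forall>k<N. \<not> P k then 2^N else 0)"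
    using Suc.IH by (simp add: F_def)
  finally show ?case by (auto simp: less_Suc_eq)
qed

lemma bits_eq:
  fixes x y :: nat
  assumes "x < 2^N" "y < 2^N" "\<forall>k<N. odd (x div 2^k) \<longleftrightarrow> odd (y div 2^k)"
  shows "x = y"
proof (rule bit_eqI)
  fix n
  show "bit x n \<longleftrightarrow> bit y n"
  proof (cases "n < N")
    case True thus ?thesis using assms(3) by (simp add: bit_iff_odd)
  next
    case False
    hence "(2::nat)^N \<le> 2^n" by simp
    hence "x < 2^n" "y < 2^n" using assms(1,2) by linarith+
    hence "x div 2^n = 0" "y div 2^n = 0" by (auto intro!: div_less)
    thus ?thesis by (simp add: bit_iff_odd)
  qed
qed

lemma dvec_prod: "\<nu> < 2^N \<Longrightarrow> dvec N \<mu> \<nu> =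
   (\<Prod>k<N. if odd (\<mu> div 2^k) \<and> odd (\<nu> div 2^k) then -1 else 1)"
  by (simp add: dvec_def sgn_prod)

lemma xor_lt: "x < 2^N \<Longrightarrow> y < 2^N \<Longrightarrow> (xor x y :: nat) < 2^N"
  by (metis take_bit_nat_eq_self_iff take_bit_xor)

lemma odd_xor: "odd ((xor x y :: nat) div 2^k) \<longleftrightarrow> (odd (x div 2^k) \<noteq> odd (y div 2^k))"
  by (simp add: bit_iff_odd[symmetric] bit_xor_iff)

lemma dvec_mult: "x < 2^N \<Longrightarrow> y < 2^N \<Longrightarrow> dvec N x i * dvec N y i = dvec N (xor x y) i"
proof (cases "i < 2^N")
  case True
  assume "x < 2^N" "y < 2^N"
  show ?thesis using True
    by (simp add: dvec_prod prod.distrib[symmetric] odd_xor) (rule prod.cong, auto)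
qed (simp add: dvec_def)

lemma dvec_zero: "dvec N 0 i = (if i < 2^N then 1 else 0)"
  by (simp add: dvec_def bitdot_def)

lemma dvec_at0: "dvec N x 0 = 1"
  by (simp add: dvec_def bitdot_def)

lemma dvec_sq: "i < 2^N \<Longrightarrow> dvec N x i * dvec N x i = 1"
  by (simp add: dvec_def)

lemma sum_dvec: "x < 2^N \<Longrightarrow> (\<Sum>i<2^N. dvec N x i) = (if x = 0 then 2^N else 0)"
proof -
  assume x: "x < 2^N"
  have "(\<Sum>i<2^N. dvec N x i) = (\<Sum>i\<in>{..<(2::nat)^N}. \<Prod>k<N. if odd (x div 2^k) \<and> odd (i div 2^k) then -1 else (1::real))"
    by (rule sum.cong) (auto simp: dvec_prod)
  also have "\<dots> = (if \<forall>k<N. \<not> odd (x div 2^k) then 2^N else 0)" by (rule orth)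
  also have "(\<forall>k<N. \<not> odd (x div 2^k)) \<longleftrightarrow> x = 0"
    using bits_eq[OF x, of 0] by auto
  finally show ?thesis .
qed

lemma bitdot_comm: "bitdot N x y = bitdot N y x"
  unfolding bitdot_def by (simp add: mult.commute)

lemma sum_dvec_mu: "i < 2^N \<Longrightarrow> (\<Sum>x<2^N. dvec N x i) = (if i = 0 then 2^N else 0)"
proof -
  assume i: "i < 2^N"
  have "(\<Sum>x<2^N. dvec N x i) = (\<Sum>x<2^N. dvec N i x)"
    by (rule sum.cong) (auto simp: dvec_def i bitdot_comm)
  thus ?thesis using sum_dvec[OF i] by simp
qed

lemma xor_eq0: "(xor x y :: nat) = 0 \<longleftrightarrow> x = y"
  by (metis xor_self_eq xor.left_neutral xor.assoc)

lemma sum_delta_mult: "(\<Sum>k<(D::nat). (if i = k then a else 0) * f k) = (if i < D then a * f i else (0::real))"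
proof -
  have "(\<Sum>k<D. (if i = k then a else 0) * f k) = (\<Sum>k<D. if i = k then a * f i else 0)"
    by (intro sum.cong) auto
  also have "\<dots> = (if i < D then a * f i else 0)" by (simp add: sum.delta sum.delta')
  finally show ?thesis .
qed

lemma sum_delta_mult': "(\<Sum>k<(D::nat). f k * (if i = k then a else 0)) = (if i < D then f i * a else (0::real))"
proof -
  have "(\<Sum>k<D. f k * (if i = k then a else 0)) = (\<Sum>k<D. if i = k then f i * a else 0)"
    by (intro sum.cong) auto
  also have "\<dots> = (if i < D then f i * a else 0)" by (simp add: sum.delta sum.delta')
  finally show ?thesis .
qed

lemma dvec_out: "\<not> i < 2^N \<Longrightarrow> dvec N x i = 0"
  by (simp add: dvec_def)

lemma act_phi_phi:
  assumes "x < 2^N" "y < 2^N"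
  shows "actA (2^N) (phi N x) (phi N y) = phi N (xor x y)"
proof (intro ext)
  fix i j
  show "actA (2^N) (phi N x) (phi N y) i j = phi N (xor x y) i j"
    unfolding actA_def phi_def
    by (simp add: sum_delta_mult dvec_out dvec_mult[OF assms, symmetric])
qed

lemma minner_diag:
  "minner (2^N) (\<lambda>i j. if i = j then f i else 0) X = (\<Sum>i<2^N. f i * X i i)"
  unfolding minner_def by (simp add: sum_delta_mult)

lemma Emeas_diag: "Emeas N y = (\<lambda>i j. if i = j then dvec N y i / 2^N else 0)"
  by (auto simp: Emeas_def phi_def intro!: ext)

lemma minner_Emeas_phi:
  assumes "x < 2^N" "y < 2^N"
  shows "minner (2^N) (Emeas N y) (phi N x) = (if y = x then 1 else 0)"
proof -
  have "minner (2^N) (Emeas N y) (phi N x) = (\<Sum>i<2^N. dvec N y i / 2^N * dvec N x i)"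
    unfolding Emeas_diag minner_diag by (simp add: phi_def)
  also have "\<dots> = (\<Sum>i<2^N. dvec N (xor y x) i) / 2^N"
    by (simp add: sum_divide_distrib dvec_mult[OF assms(2,1), symmetric])
  also have "\<dots> = (if y = x then 1 else 0)"
    using sum_dvec[OF xor_lt[OF assms(2,1)]] by (simp add: xor_eq0)
  finally show ?thesis .
qed

lemma phi0_phi: "x < 2^N \<Longrightarrow> actA (2^N) (phi N x) (phi N 0) = phi N x"
  using act_phi_phi[of x N 0] by simp

lemma sum_Emeas: "(\<Sum>y<2^N. Emeas N y) = unitAB"
proof (intro ext)
  fix i j
  have "(\<Sum>y<2^N. Emeas N y) i j = (\<Sum>y<2^N. Emeas N y i j)" by (rule sum_fun_apply2)
  also have "\<dots> = unitAB i j"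
  proof (cases "i = j \<and> i < 2^N")
    case True
    thus ?thesis using sum_dvec_mu[of i N]
      by (simp add: Emeas_diag unitAB_def tens_def unitv_def sum_divide_distrib[symmetric])
  next
    case False
    have "(0::nat) < 2^N" by simp
    hence "i = j \<Longrightarrow> i \<noteq> 0" using False by (metis not_less_zero)
    thus ?thesis using False by (cases "i = j") (auto simp: Emeas_diag unitAB_def tens_def unitv_def dvec_out)
  qed
  finally show "(\<Sum>y<2^N. Emeas N y) i j = unitAB i j" .
qed

lemma Emeas_msp: "Emeas N y \<in> msp (2^N)"
  by (auto simp: msp_def Emeas_diag dvec_out)

lemma lin_sum: "(\<Sum>i\<in>A. t * f i + s * g i) = t * (\<Sum>i\<in>A. f i) + s * (\<Sum>i\<in>A. g i :: real)"
  by (simp add: sum.distrib sum_distrib_left)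

lemma minner_comb: "minner D E (\<lambda>a b. t * X a b + (1 - t) * Y a b) = t * minner D E X + (1 - t) * minner D E Y"
proof -
  have "\<And>i j. E i j * (t * X i j + (1-t)*Y i j) = t * (E i j * X i j) + (1-t) * (E i j * Y i j)"
    by (simp add: algebra_simps)
  thus ?thesis unfolding minner_def by (simp only: lin_sum)
qed

lemma binclosed_preimage:
  assumes "binclosed C" "\<And>X Y t. f (\<lambda>a b. t * X a b + (1 - t) * Y a b) = (\<lambda>a b. t * f X a b + (1 - t) * f Y a b)"
  shows "binclosed {X. f X \<in> C}"
  unfolding binclosed_def using binclosedD[OF assms(1)] assms(2) by auto

lemma binclosed_preimage_all:
  assumes "binclosed C" "\<And>S T t X. g (\<lambda>a b. t * S a b + (1 - t) * T a b) X = (\<lambda>a b. t * g S X a b + (1 - t) * g T X a b)"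
  shows "binclosed {T. \<forall>X\<in>A. g T X \<in> C}"
  unfolding binclosed_def using binclosedD[OF assms(1)] assms(2) by auto

lemma conv01: "0 \<le> (t::real) \<Longrightarrow> t \<le> 1 \<Longrightarrow> 0 \<le> u \<Longrightarrow> u \<le> 1 \<Longrightarrow> 0 \<le> v \<Longrightarrow> v \<le> 1 \<Longrightarrow>
   0 \<le> t * u + (1 - t) * v \<and> t * u + (1 - t) * v \<le> 1"
proof -
  assume a: "0 \<le> t" "t \<le> 1" "0 \<le> u" "u \<le> 1" "0 \<le> v" "v \<le> 1"
  have "t * u \<le> t" using a mult_left_mono[of u 1 t] by simp
  moreover have "(1 - t) * v \<le> (1 - t)" using a mult_left_mono[of v 1 "1-t"] by simp
  moreover have "0 \<le> t * u" "0 \<le> (1 - t) * v" using a by auto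
  ultimately show ?thesis by linarith
qed

lemma binclosed_minner: "binclosed {X. 0 \<le> minner D E X \<and> minner D E X \<le> 1}"
  unfolding binclosed_def by (auto simp: minner_comb conv01)

lemma dvec_pm: "i < 2^N \<Longrightarrow> dvec N y i = 1 \<or> dvec N y i = -1"
  by (simp add: dvec_def minus_one_power_iff)

lemma prod_bound:
  assumes "s = 1 \<or> s = -1"
  shows "-(a^2 + b^2)/2 \<le> s * a * (b::real) \<and> s * a * b \<le> (a^2 + b^2)/2"
proof -
  have "0 \<le> (a - b)^2" "0 \<le> (a + b)^2" by auto
  thus ?thesis using assms by (auto simp: power2_eq_square algebra_simps)
qed

lemma lin_aux: "(s::real) \<le> p \<Longrightarrow> q \<le> s \<Longrightarrow> p = (a+b)/2 \<Longrightarrow> q = -(a+b)/2 \<Longrightarrow> a \<le> 1 \<Longrightarrow> b \<le> 1 \<Longrightarrow> -1 \<le> s \<and> s \<le> 1"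
  by simp

lemma Emeas_tens:
  assumes N: "1 \<le> N" and v: "v \<in> hyp_states (2^N)" and w: "w \<in> hyp_states (2^N)"
  shows "0 \<le> minner (2^N) (Emeas N y) (tens v w) \<and> minner (2^N) (Emeas N y) (tens v w) \<le> 1"
proof -
  define D :: nat where "D = 2^N"
  have "(2::real)^1 \<le> 2^N" by (rule power_increasing) (use N in auto)
  hence D2: "(2::real) \<le> 2^N" by simp
  define S where "S = (\<Sum>i\<in>{1..<(2::nat)^N}. dvec N y i * v i * w i)"
  have M: "minner (2^N) (Emeas N y) (tens v w) = (\<Sum>i<2^N. dvec N y i * v i * w i) / 2^N"
    unfolding Emeas_diag minner_diag by (simp add: tens_def sum_divide_distrib algebra_simps)
  have D0: "{..<(2::nat)^N} = insert 0 {1..<2^N}" by auto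
  have S1: "(\<Sum>i<2^N. dvec N y i * v i * w i) = 1 + (\<Sum>i\<in>{1..<2^N}. dvec N y i * v i * w i)"
    using v w by (simp add: D0 dvec_at0 hyp_states_def)
  have b: "-((v i)^2 + (w i)^2)/2 \<le> dvec N y i * v i * w i \<and> dvec N y i * v i * w i \<le> ((v i)^2 + (w i)^2)/2"
    if "i \<in> {1..<2^N}" for i
    using that by (intro prod_bound dvec_pm) auto
  have f1: "(\<Sum>i\<in>{1..<2^N}. dvec N y i * v i * w i) \<le> (\<Sum>i\<in>{1..<(2::nat)^N}. ((v i)^2 + (w i)^2)/2)"
    using b by (intro sum_mono) auto
  have f2: "(\<Sum>i\<in>{1..<(2::nat)^N}. -((v i)^2 + (w i)^2)/2) \<le> (\<Sum>i\<in>{1..<2^N}. dvec N y i * v i * w i)"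
    using b by (intro sum_mono) auto
  have f3: "(\<Sum>i\<in>{1..<(2::nat)^N}. ((v i)^2 + (w i)^2)/2) = ((\<Sum>i\<in>{1..<(2::nat)^N}. (v i)^2) + (\<Sum>i\<in>{1..<(2::nat)^N}. (w i)^2))/2"
    by (simp only: sum_divide_distrib[symmetric] sum.distrib)
  have f4: "(\<Sum>i\<in>{1..<(2::nat)^N}. -((v i)^2 + (w i)^2)/2) = - ((\<Sum>i\<in>{1..<(2::nat)^N}. (v i)^2) + (\<Sum>i\<in>{1..<(2::nat)^N}. (w i)^2))/2"
    by (simp only: sum_divide_distrib[symmetric] sum.distrib sum_negf)
  have f5: "(\<Sum>i\<in>{1..<(2::nat)^N}. (v i)^2) \<le> 1" "(\<Sum>i\<in>{1..<(2::nat)^N}. (w i)^2) \<le> 1"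
    using v w by (auto simp: hyp_states_def)
  have Sb: "-1 \<le> S \<and> S \<le> 1" unfolding S_def by (rule lin_aux[OF f1 f2 f3 f4 f5])
  have MS: "minner (2^N) (Emeas N y) (tens v w) = (1 + S) / 2^N" using M S1 by (simp add: S_def)
  have "(1 + S) / 2^N \<le> 1" using Sb D2 by (simp add: pos_divide_le_eq)
  moreover have "0 \<le> (1 + S) / 2^N" using Sb by simp
  ultimately show ?thesis unfolding MS by simp
qed

lemma Emeas_eff:
  assumes N: "1 \<le> N" and y: "y < 2^N"
  shows "Emeas N y \<in> EffAB N"
proof -
  let ?C = "{X. 0 \<le> minner (2^N) (Emeas N y) X \<and> minner (2^N) (Emeas N y) X \<le> 1}"
  have "min_tensor (2^N) \<subseteq> ?C"
    unfolding min_tensor_def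
    by (rule mhull_least[OF binclosed_minner]) (use Emeas_tens[OF N] in auto)
  moreover have "{phi N \<mu> | \<mu>. \<mu> < 2^N} \<subseteq> ?C"
    using minner_Emeas_phi[OF _ y] by auto
  ultimately have "OmegaAB N \<subseteq> ?C"
    unfolding OmegaAB_def by (intro mhull_least[OF binclosed_minner]) auto
  thus ?thesis using Emeas_msp unfolding EffAB_def by blast
qed

lemma actA_comb2: "actA D T (\<lambda>a b. t * X a b + (1 - t) * Y a b) =
   (\<lambda>a b. t * actA D T X a b + (1 - t) * actA D T Y a b)"
proof -
  have "\<And>i j k. T i k * (t * X k j + (1-t)*Y k j) = t * (T i k * X k j) + (1-t) * (T i k * Y k j)"
    by (simp add: algebra_simps)
  thus ?thesis unfolding actA_def by (simp only: lin_sum)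
qed

lemma actA_comb1: "actA D (\<lambda>a b. t * S a b + (1 - t) * T a b) X =
   (\<lambda>a b. t * actA D S X a b + (1 - t) * actA D T X a b)"
proof -
  have "\<And>i j k. (t * S i k + (1-t)*T i k) * X k j = t * (S i k * X k j) + (1-t) * (T i k * X k j)"
    by (simp add: algebra_simps)
  thus ?thesis unfolding actA_def by (simp only: lin_sum)
qed

lemma act_tens: "actA (2^N) (phi N \<mu>) (tens v w) = tens (\<lambda>i. dvec N \<mu> i * v i) w"
  unfolding actA_def phi_def tens_def
  by (auto intro!: ext simp: sum_delta_mult dvec_out)

lemma hyp_flip:
  assumes v: "v \<in> hyp_states (2^N)"
  shows "(\<lambda>i. dvec N \<mu> i * v i) \<in> hyp_states (2^N)"
proof -
  have "(\<Sum>i\<in>{1..<(2::nat)^N}. (dvec N \<mu> i * v i)^2) = (\<Sum>i\<in>{1..<(2::nat)^N}. (v i)^2)"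
    by (rule sum.cong) (auto simp: power_mult_distrib power2_eq_square[of "dvec N \<mu> _"] dvec_sq)
  thus ?thesis using v by (auto simp: hyp_states_def vsp_def dvec_at0)
qed

lemma min_tensor_closed:
  assumes X: "X \<in> min_tensor (2^N)"
  shows "actA (2^N) (phi N \<mu>) X \<in> min_tensor (2^N)"
proof -
  let ?C = "{X. actA (2^N) (phi N \<mu>) X \<in> min_tensor (2^N)}"
  have bc: "binclosed ?C"
    unfolding min_tensor_def by (rule binclosed_preimage[OF binclosed_mhull actA_comb2])
  have "{tens v w | v w. v \<in> hyp_states (2^N) \<and> w \<in> hyp_states (2^N)} \<subseteq> ?C"
  proof
    fix Y assume "Y \<in> {tens v w | v w. v \<in> hyp_states (2^N) \<and> w \<in> hyp_states (2^N)}"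
    then obtain v w where "Y = tens v w" "v \<in> hyp_states (2^N)" "w \<in> hyp_states (2^N)" by blast
    thus "Y \<in> ?C" unfolding min_tensor_def using mhull_sub act_tens hyp_flip by fastforce
  qed
  hence "min_tensor (2^N) \<subseteq> ?C" unfolding min_tensor_def by (rule mhull_least[OF bc[unfolded min_tensor_def]])
  thus ?thesis using X by auto
qed

lemma Omega_closed_phi:
  assumes mu: "\<mu> < 2^N" and X: "X \<in> OmegaAB N"
  shows "actA (2^N) (phi N \<mu>) X \<in> OmegaAB N"
proof -
  let ?C = "{X. actA (2^N) (phi N \<mu>) X \<in> OmegaAB N}"
  have bc: "binclosed ?C"
    unfolding OmegaAB_def by (rule binclosed_preimage[OF binclosed_mhull actA_comb2])
  have "min_tensor (2^N) \<union> {phi N \<nu> | \<nu>. \<nu> < 2^N} \<subseteq> ?C"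
  proof
    fix Y assume "Y \<in> min_tensor (2^N) \<union> {phi N \<nu> | \<nu>. \<nu> < 2^N}"
    thus "Y \<in> ?C"
    proof
      assume "Y \<in> min_tensor (2^N)"
      thus ?thesis unfolding OmegaAB_def using min_tensor_closed mhull_sub by fastforce
    next
      assume "Y \<in> {phi N \<nu> | \<nu>. \<nu> < 2^N}"
      then obtain \<nu> where "Y = phi N \<nu>" "\<nu> < 2^N" by blast
      thus ?thesis unfolding OmegaAB_def using act_phi_phi[OF mu] xor_lt[OF mu] mhull_sub by fastforce
    qed
  qed
  hence "OmegaAB N \<subseteq> ?C" unfolding OmegaAB_def by (rule mhull_least[OF bc[unfolded OmegaAB_def]])
  thus ?thesis using X by auto
qed

lemma Omega_closed:
  assumes T: "T \<in> allowedT N" and X: "X \<in> OmegaAB N"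
  shows "actA (2^N) T X \<in> OmegaAB N"
proof -
  let ?C = "{T. \<forall>X\<in>OmegaAB N. actA (2^N) T X \<in> OmegaAB N}"
  have bc: "binclosed ?C"
    unfolding OmegaAB_def by (rule binclosed_preimage_all[OF binclosed_mhull actA_comb1])
  have "{phi N \<mu> | \<mu>. \<mu> < 2^N} \<subseteq> ?C" using Omega_closed_phi by blast
  hence "allowedT N \<subseteq> ?C" unfolding allowedT_def by (rule mhull_least[OF bc])
  thus ?thesis using T X by auto
qed

lemma term_bound:
  assumes z: "0 < z" and W: "0 < W" "W \<le> 2 * A" and Q: "0 < Q"
  shows "z * log 2 (W / Q) \<le> z + (z * A / Q - z) / ln 2"
proof -
  have A: "0 < A" using W by linarith
  have "log 2 (W / Q) \<le> log 2 (2 * A / Q)"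
    using W A Q by (simp add: divide_right_mono)
  also have "log 2 (2 * A / Q) = 1 + log 2 (A / Q)"
    using A Q by (simp add: log_mult times_divide_eq_right[symmetric] del: times_divide_eq_right)
  also have "log 2 (A / Q) = ln (A / Q) / ln 2" by (simp add: log_def)
  also have "\<dots> \<le> (A / Q - 1) / ln 2"
    using A Q by (intro divide_right_mono ln_le_minus_one) auto
  finally have "log 2 (W / Q) \<le> 1 + (A / Q - 1) / ln 2" by simp
  hence "z * log 2 (W / Q) \<le> z * (1 + (A / Q - 1) / ln 2)" using z by (intro mult_left_mono) auto
  also have "\<dots> = z + (z * A / Q - z) / ln 2" by (simp add: field_simps)
  finally show ?thesis .
qed

lemma mi_le1:
  assumes p: "is_distr m p"
    and W0: "\<forall>x<m. \<forall>y<k. 0 \<le> W x y" and Ws: "\<forall>x<m. (\<Sum>y<k. W x y) = 1"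
    and a0: "\<forall>y<k. 0 \<le> a y" and as: "(\<Sum>y<k. a y) = 1"
    and W2: "\<forall>x<m. \<forall>y<k. W x y \<le> 2 * a y"
  shows "mutual_info m k p W \<le> 1"
proof -
  define q where "q y = (\<Sum>x<m. p x * W x y)" for y
  define t where "t x y = (if p x * W x y = 0 then 0 else p x * W x y * log 2 (W x y / q y))" for x y
  have p0: "\<forall>x<m. 0 \<le> p x" and ps: "(\<Sum>x<m. p x) = 1" using p by (auto simp: is_distr_def)
  have pw0: "0 \<le> p x * W x y" if "x < m" "y < k" for x y using p0 W0 that by auto
  have mi: "mutual_info m k p W = (\<Sum>y<k. \<Sum>x<m. t x y)"
    unfolding mutual_info_def t_def q_def by (rule sum.swap)
  have col: "(\<Sum>x<m. t x y) \<le> q y + (a y - q y) / ln 2" if y: "y < k" for y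
  proof (cases "q y = 0")
    case True
    have "\<forall>x\<in>{..<m}. p x * W x y = 0"
      using True pw0 y unfolding q_def by (subst sum_nonneg_eq_0_iff[symmetric]) auto
    hence "(\<Sum>x<m. t x y) = 0" by (simp add: t_def)
    thus ?thesis using True a0 y by simp
  next
    case False
    have qpos: "0 < q y" using False pw0 y unfolding q_def
      by (metis (no_types, lifting) lessThan_iff order_le_less sum_nonneg)
    have "t x y \<le> p x * W x y + (p x * W x y * a y / q y - p x * W x y) / ln 2" if x: "x < m" for x
    proof (cases "p x * W x y = 0")
      case True show ?thesis by (simp only: t_def True if_True) simp
    next
      case False
      have z: "0 < p x * W x y" using pw0[OF x y] False by linarith
      have "0 < W x y" using z p0 W0 x y
        by (metis mult_eq_0_iff order_le_less zero_less_mult_pos)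
      thus ?thesis using term_bound[OF z _ _ qpos, of "W x y" "a y"] W2 x y False
        by (simp add: t_def)
    qed
    hence "(\<Sum>x<m. t x y) \<le> (\<Sum>x<m. p x * W x y + (p x * W x y * a y / q y - p x * W x y) / ln 2)"
      by (intro sum_mono) auto
    also have "\<dots> = q y + (q y * a y / q y - q y) / ln 2"
      unfolding q_def by (simp add: sum.distrib sum_divide_distrib[symmetric] sum_subtractf sum_distrib_right[symmetric])
    also have "\<dots> = q y + (a y - q y) / ln 2" using qpos by simp
    finally show ?thesis .
  qed
  have "mutual_info m k p W \<le> (\<Sum>y<k. q y + (a y - q y) / ln 2)"
    unfolding mi by (intro sum_mono col) auto
  also have "\<dots> = (\<Sum>y<k. q y) + ((\<Sum>y<k. a y) - (\<Sum>y<k. q y)) / ln 2"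
    by (simp add: sum.distrib sum_divide_distrib[symmetric] sum_subtractf)
  also have "(\<Sum>y<k. q y) = 1"
  proof -
    have "(\<Sum>y<k. q y) = (\<Sum>x<m. p x * (\<Sum>y<k. W x y))"
      unfolding q_def by (simp add: sum_distrib_left) (rule sum.swap)
    also have "\<dots> = (\<Sum>x<m. p x)" using Ws by simp
    finally show ?thesis using ps by simp
  qed
  finally show ?thesis using as by simp
qed

lemma mutual_info_cong:
  assumes "\<forall>x<m. \<forall>y<k. W x y = W' x y"
  shows "mutual_info m k p W = mutual_info m k p W'"
proof -
  have q: "(\<Sum>x'<m. p x' * W x' y) = (\<Sum>x'<m. p x' * W' x' y)" if "y < k" for y
    using assms that by (intro sum.cong) auto
  show ?thesis unfolding mutual_info_def
    by (intro sum.cong refl) (use assms q in auto)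
qed

lemma mi_identity:
  assumes M: "0 < M"
  shows "mutual_info M M (\<lambda>_. 1 / real M) (\<lambda>x y. if y = x then 1 else 0) = log 2 (real M)"
proof -
  have q: "(\<Sum>x'<M. 1 / real M * (if y = x' then 1 else 0)) = 1 / real M" if "y < M" for y
    using that by (simp add: sum_divide_distrib[symmetric] sum.delta)
  have inner: "(\<Sum>y<M. if 1 / real M * (if y = x then 1 else 0) = 0 then 0
        else 1 / real M * (if y = x then 1 else 0) * log 2 ((if y = x then 1 else 0) /
          (\<Sum>x'<M. 1 / real M * (if y = x' then 1 else 0)))) = log 2 (real M) / real M"
    if x: "x < M" for x
  proof -
    have "(\<Sum>y<M. if 1 / real M * (if y = x then 1 else 0) = 0 then 0
        else 1 / real M * (if y = x then 1 else 0) * log 2 ((if y = x then 1 else 0) /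
          (\<Sum>x'<M. 1 / real M * (if y = x' then 1 else 0)))) =
        (\<Sum>y<M. if y = x then log 2 (real M) / real M else 0)"
      using M q by (intro sum.cong refl) (auto simp: log_divide)
    also have "\<dots> = log 2 (real M) / real M" using x by simp
    finally show ?thesis .
  qed
  have "mutual_info M M (\<lambda>_. 1 / real M) (\<lambda>x y. if y = x then 1 else 0) =
      (\<Sum>x<M. log 2 (real M) / real M)"
    unfolding mutual_info_def by (intro sum.cong refl) (use inner in auto)
  also have "\<dots> = log 2 (real M)" using M by simp
  finally show ?thesis .
qed

lemma sum_delta_l: "(\<Sum>k<(D::nat). (if k = i then a else 0) * f k) = (if i < D then a * f i else (0::real))"
proof -
  have "(\<Sum>k<D. (if k = i then a else 0) * f k) = (\<Sum>k<D. if k = i then a * f i else 0)"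
    by (intro sum.cong) auto
  also have "\<dots> = (if i < D then a * f i else 0)" by (simp add: sum.delta sum.delta')
  finally show ?thesis .
qed

lemma sum_delta_r: "(\<Sum>k<(D::nat). f k * (if k = i then a else 0)) = (if i < D then f i * a else (0::real))"
proof -
  have "(\<Sum>k<D. f k * (if k = i then a else 0)) = (\<Sum>k<D. if k = i then f i * a else 0)"
    by (intro sum.cong) auto
  also have "\<dots> = (if i < D then f i * a else 0)" by (simp add: sum.delta sum.delta')
  finally show ?thesis .
qed

lemma vinner_unitv_right: "0 < D \<Longrightarrow> vinner D e unitv = e 0"
  unfolding vinner_def unitv_def by (simp add: sum_delta_r)

lemma vinner_unitv_left: "0 < D \<Longrightarrow> vinner D unitv w = w 0"
  unfolding vinner_def unitv_def by (simp add: sum_delta_l)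

lemma unitv_state: "0 < D \<Longrightarrow> unitv \<in> hyp_states D"
  unfolding hyp_states_def vsp_def unitv_def by auto

lemma refl_state:
  assumes D: "0 < D" and w: "\<omega> \<in> hyp_states D"
  shows "(\<lambda>i. if i = 0 then 1 else - \<omega> i) \<in> hyp_states D"
proof -
  have "(\<Sum>i\<in>{1..<D}. (if i = 0 then 1 else - \<omega> i)\<^sup>2) = (\<Sum>i\<in>{1..<D}. (\<omega> i)\<^sup>2)"
    by (rule sum.cong) auto
  thus ?thesis using w D unfolding hyp_states_def vsp_def by auto
qed

lemma eff_le:
  assumes D: "0 < D" and e: "e \<in> hyp_effects D" and w: "\<omega> \<in> hyp_states D"
  shows "vinner D e \<omega> \<le> 2 * e 0"
proof -
  let ?w = "\<lambda>i. if i = 0 then 1 else - \<omega> i"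
  have w0: "\<omega> 0 = 1" using w by (simp add: hyp_states_def)
  have "vinner D e \<omega> + vinner D e ?w = (\<Sum>i<D. e i * (if i = 0 then 2 else 0))"
    unfolding vinner_def sum.distrib[symmetric]
    by (rule sum.cong) (auto simp: w0 algebra_simps)
  also have "\<dots> = 2 * e 0" using D by (simp add: sum_delta_r mult.commute)
  finally have "vinner D e \<omega> + vinner D e ?w = 2 * e 0" .
  moreover have "0 \<le> vinner D e ?w" using e refl_state[OF D w] by (auto simp: hyp_effects_def)
  ultimately show ?thesis by linarith
qed

lemma vinner_sum: "vinner D (\<Sum>y<k. e y) w = (\<Sum>y<k. vinner D (e y) w)"
  unfolding vinner_def sum_fun_apply1 sum_distrib_right by (rule sum.swap)

lemma chi_local_le:
  assumes D: "0 < (2::nat)^N"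
  shows "chiC_local N \<le> 1"
  unfolding chiC_local_def classical_capacity_def
proof (rule Sup_least, clarify)
  fix m k :: nat and p :: "nat \<Rightarrow> real" and \<omega> e :: "nat \<Rightarrow> nat \<Rightarrow> real"
  assume p: "is_distr m p" and om: "\<forall>x<m. \<omega> x \<in> hyp_states (2^N)"
    and ef: "\<forall>y<k. e y \<in> hyp_effects (2^N)" and su: "(\<Sum>y<k. e y) = unitv"
  have "mutual_info m k p (\<lambda>x y. vinner (2^N) (e y) (\<omega> x)) \<le> 1"
  proof (rule mi_le1[OF p, where a = "\<lambda>y. e y 0"])
    show "\<forall>x<m. \<forall>y<k. 0 \<le> vinner (2^N) (e y) (\<omega> x)" using om ef by (auto simp: hyp_effects_def)
    show "\<forall>x<m. (\<Sum>y<k. vinner (2^N) (e y) (\<omega> x)) = 1"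
      using om su D by (auto simp: vinner_sum[symmetric] vinner_unitv_left hyp_states_def)
    show "\<forall>y<k. 0 \<le> e y 0"
    proof (intro allI impI)
      fix y assume "y < k"
      hence "0 \<le> vinner (2^N) (e y) unitv" using ef unitv_state[OF D] by (auto simp: hyp_effects_def)
      thus "0 \<le> e y 0" using vinner_unitv_right[OF D] by simp
    qed
    show "(\<Sum>y<k. e y 0) = 1"
      using su by (simp add: sum_fun_apply1[symmetric] unitv_def)
    show "\<forall>x<m. \<forall>y<k. vinner (2^N) (e y) (\<omega> x) \<le> 2 * e y 0"
      using om ef eff_le[OF D] by auto
  qed
  thus "ereal (mutual_info m k p (\<lambda>x y. vinner (2^N) (e y) (\<omega> x))) \<le> 1" by simp
qed

lemma two_sum: "2 \<le> D \<Longrightarrow> (\<forall>i. 2 \<le> i \<longrightarrow> f i = 0) \<Longrightarrow> (\<Sum>i<D. f i) = f 0 + f (1::nat)"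
proof -
  assume D: "2 \<le> D" and f: "\<forall>i. 2 \<le> i \<longrightarrow> f i = 0"
  have "(\<Sum>i<D. f i) = (\<Sum>i\<in>{0,1}. f i)"
    using D f by (intro sum.mono_neutral_right) auto
  thus ?thesis by simp
qed

lemma one_sum: "2 \<le> D \<Longrightarrow> (\<forall>i. 2 \<le> i \<longrightarrow> f i = 0) \<Longrightarrow> (\<Sum>i\<in>{1..<D}. f i) = f (1::nat)"
proof -
  assume D: "2 \<le> D" and f: "\<forall>i. 2 \<le> i \<longrightarrow> f i = 0"
  have "(\<Sum>i\<in>{1..<D}. f i) = (\<Sum>i\<in>{1}. f i)"
    using D f by (intro sum.mono_neutral_right) auto
  thus ?thesis by simp
qed

lemma chi_local_ge:
  assumes N: "1 \<le> N"
  shows "1 \<le> chiC_local N"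
proof -
  have "(2::nat)^1 \<le> 2^N" by (rule power_increasing) (use N in auto)
  hence D: "2 \<le> (2::nat)^N" by simp
  define s :: "nat \<Rightarrow> real" where "s x = (if x = 0 then 1 else -1)" for x
  define \<omega> where "\<omega> x = (\<lambda>i::nat. if i = 0 then 1 else if i = 1 then s x else (0::real))" for x
  define e where "e y = (\<lambda>i::nat. if i = 0 then 1/2 else if i = 1 then s y / 2 else (0::real))" for y
  have s2: "s x * s x = 1" for x by (simp add: s_def)
  have om: "\<forall>x<2. \<omega> x \<in> hyp_states (2^N)"
  proof (intro allI impI)
    fix x :: nat
    have "(\<Sum>i\<in>{1..<(2::nat)^N}. (\<omega> x i)\<^sup>2) = (\<omega> x 1)\<^sup>2" by (rule one_sum[OF D]) (simp add: \<omega>_def)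
    thus "\<omega> x \<in> hyp_states (2^N)" using D
      by (auto simp: hyp_states_def vsp_def \<omega>_def power2_eq_square s2)
  qed
  have vi: "vinner (2^N) (e y) w = w 0 / 2 + s y * w 1 / 2" for y w
    unfolding vinner_def by (subst two_sum[OF D]) (auto simp: e_def)
  have ef: "\<forall>y<2. e y \<in> hyp_effects (2^N)"
  proof (intro allI impI)
    fix y :: nat
    have "0 \<le> vinner (2^N) (e y) w \<and> vinner (2^N) (e y) w \<le> 1" if w: "w \<in> hyp_states (2^N)" for w
    proof -
      have w0: "w 0 = 1" using w by (simp add: hyp_states_def)
      have "(w 1)^2 \<le> (\<Sum>i\<in>{1..<(2::nat)^N}. (w i)^2)"
        using D by (intro member_le_sum) auto
      also have "\<dots> \<le> 1" using w by (simp add: hyp_states_def)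
      finally have "\<bar>w 1\<bar> \<le> 1" by (simp add: abs_square_le_1)
      thus ?thesis unfolding vi w0 by (auto simp: s_def)
    qed
    moreover have "e y \<in> vsp (2^N)" using D by (auto simp: vsp_def e_def)
    ultimately show "e y \<in> hyp_effects (2^N)" by (auto simp: hyp_effects_def)
  qed
  have su: "(\<Sum>y<2. e y) = unitv"
    by (auto intro!: ext simp: numeral_2_eq_2 e_def s_def unitv_def)
  have p: "is_distr 2 (\<lambda>_. 1 / real 2)" by (simp add: is_distr_def)
  have mi: "mutual_info 2 2 (\<lambda>_. 1 / real 2) (\<lambda>x y. vinner (2^N) (e y) (\<omega> x)) = 1"
  proof -
    have "mutual_info 2 2 (\<lambda>_. 1 / real 2) (\<lambda>x y. vinner (2^N) (e y) (\<omega> x)) =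
        mutual_info 2 2 (\<lambda>_. 1 / real 2) (\<lambda>x y. if y = x then 1 else 0)"
      by (rule mutual_info_cong) (auto simp: vi \<omega>_def s_def less_2_cases_iff)
    also have "\<dots> = 1" by (subst mi_identity) auto
    finally show ?thesis .
  qed
  show ?thesis unfolding chiC_local_def classical_capacity_def
    by (rule Sup_upper2[where u = "ereal 1"], rule CollectI,
        rule exI[of _ 2], rule exI[of _ 2], rule exI[of _ "\<lambda>_. 1 / real 2"], rule exI[of _ \<omega>], rule exI[of _ e])
       (use p om ef su mi in auto)
qed

lemma chiDC_le: "chiDC_AB N \<le> chiC_AB N"
  unfolding chiDC_AB_def chiC_AB_def dense_coding_capacity_def classical_capacity_def
proof (rule Sup_subset_mono, rule subsetI)
  fix z assume "z \<in> {ereal (mutual_info m k p (\<lambda>x y. minner (2^N) (E y) (actA (2^N) (T x) \<phi>))) | m k p \<phi> T E.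
            \<phi> \<in> OmegaAB N \<and> is_distr m p \<and> (\<forall>x<m. T x \<in> allowedT N) \<and> (\<forall>y<k. E y \<in> EffAB N) \<and> (\<Sum>y<k. E y) = unitAB}"
  then obtain m k p \<phi> T E where z: "z = ereal (mutual_info m k p (\<lambda>x y. minner (2^N) (E y) (actA (2^N) (T x) \<phi>)))"
    and h: "\<phi> \<in> OmegaAB N" "is_distr m p" "\<forall>x<m. T x \<in> allowedT N" "\<forall>y<k. E y \<in> EffAB N" "(\<Sum>y<k. E y) = unitAB"
    by blast
  show "z \<in> {ereal (mutual_info m k p (\<lambda>x y. minner (2^N) (e y) (\<omega> x))) | m k p \<omega> e.
            is_distr m p \<and> (\<forall>x<m. \<omega> x \<in> OmegaAB N) \<and> (\<forall>y<k. e y \<in> EffAB N) \<and> (\<Sum>y<k. e y) = unitAB}"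
    by (rule CollectI, rule exI[of _ m], rule exI[of _ k], rule exI[of _ p],
        rule exI[of _ "\<lambda>x. actA (2^N) (T x) \<phi>"], rule exI[of _ E])
       (use z h Omega_closed in auto)
qed

lemma chiDC_ge:
  assumes N: "1 \<le> N"
  shows "ereal (real N) \<le> chiDC_AB N"
proof -
  have Dp: "0 < (2::nat)^N" by simp
  have p: "is_distr (2^N) (\<lambda>_. 1 / real (2^N))" by (simp add: is_distr_def)
  have mi: "mutual_info (2^N) (2^N) (\<lambda>_. 1 / real (2^N))
      (\<lambda>x y. minner (2^N) (Emeas N y) (actA (2^N) (phi N x) (phi N 0))) = real N"
  proof -
    have "mutual_info (2^N) (2^N) (\<lambda>_. 1 / real (2^N))
      (\<lambda>x y. minner (2^N) (Emeas N y) (actA (2^N) (phi N x) (phi N 0))) =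
      mutual_info (2^N) (2^N) (\<lambda>_. 1 / real (2^N)) (\<lambda>x y. if y = x then 1 else 0)"
      by (rule mutual_info_cong) (auto simp: phi0_phi minner_Emeas_phi)
    also have "\<dots> = log 2 (real (2^N))" by (rule mi_identity[OF Dp])
    also have "\<dots> = real N" by (simp add: log_nat_power)
    finally show ?thesis .
  qed
  have "phi N 0 \<in> min_tensor (2^N) \<union> {phi N \<mu> | \<mu>. \<mu> < 2^N}" using Dp by blast
  hence ph0: "phi N 0 \<in> OmegaAB N" unfolding OmegaAB_def by (rule subsetD[OF mhull_sub])
  have T: "\<forall>x<2^N. phi N x \<in> allowedT N"
  proof (intro allI impI)
    fix x :: nat assume "x < 2^N"
    hence "phi N x \<in> {phi N \<mu> | \<mu>. \<mu> < 2^N}" by blast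
    thus "phi N x \<in> allowedT N" unfolding allowedT_def by (rule subsetD[OF mhull_sub])
  qed
  have E: "\<forall>y<2^N. Emeas N y \<in> EffAB N" using Emeas_eff[OF N] by auto
  show ?thesis unfolding chiDC_AB_def dense_coding_capacity_def
    by (rule Sup_upper2[where u = "ereal (real N)"], rule CollectI,
        rule exI[of _ "2^N"], rule exI[of _ "2^N"], rule exI[of _ "\<lambda>_. 1 / real (2^N)"],
        rule exI[of _ "phi N 0"], rule exI[of _ "phi N"], rule exI[of _ "Emeas N"])
       (use p mi ph0 T E sum_Emeas in auto)
qed

theorem mainTheorem11:
  fixes N :: nat
  assumes "1 \<le> N"
  shows "phi N 0 \<in> OmegaAB N
    \<and> (\<forall>x<2^N. phi N x \<in> allowedT N)
    \<and> (\<forall>y<2^N. Emeas N y \<in> EffAB N)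
    \<and> (\<Sum>y<2^N. Emeas N y) = unitAB
    \<and> (\<forall>x<2^N. \<forall>y<2^N.
          minner (2^N) (Emeas N y) (actA (2^N) (phi N x) (phi N 0)) = (if y = x then 1 else 0))
    \<and> chiDC_AB N \<le> chiC_AB N
    \<and> ereal (real N) \<le> chiDC_AB N
    \<and> chiC_local N = 1
    \<and> (3 \<le> N \<longrightarrow> chiDC_AB N > 2 * chiC_local N \<and> chiC_AB N > chiC_local N + chiC_local N)"
proof -
  have Dp: "0 < (2::nat)^N" by simp
  have "phi N 0 \<in> min_tensor (2^N) \<union> {phi N \<mu> | \<mu>. \<mu> < 2^N}" using Dp by blast
  hence ph0: "phi N 0 \<in> OmegaAB N" unfolding OmegaAB_def by (rule subsetD[OF mhull_sub])
  have T: "\<forall>x<2^N. phi N x \<in> allowedT N"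
  proof (intro allI impI)
    fix x :: nat assume "x < 2^N"
    hence "phi N x \<in> {phi N \<mu> | \<mu>. \<mu> < 2^N}" by blast
    thus "phi N x \<in> allowedT N" unfolding allowedT_def by (rule subsetD[OF mhull_sub])
  qed
  have E: "\<forall>y<2^N. Emeas N y \<in> EffAB N" using Emeas_eff[OF assms] by auto
  have W: "\<forall>x<2^N. \<forall>y<2^N.
          minner (2^N) (Emeas N y) (actA (2^N) (phi N x) (phi N 0)) = (if y = x then 1 else 0)"
    by (auto simp: phi0_phi minner_Emeas_phi)
  have loc: "chiC_local N = 1"
    using chi_local_le[OF Dp] chi_local_ge[OF assms] by (rule antisym)
  have le: "chiDC_AB N \<le> chiC_AB N" by (rule chiDC_le)
  have ge: "ereal (real N) \<le> chiDC_AB N" by (rule chiDC_ge[OF assms])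
  have last: "3 \<le> N \<longrightarrow> chiDC_AB N > 2 * chiC_local N \<and> chiC_AB N > chiC_local N + chiC_local N"
  proof
    assume N3: "3 \<le> N"
    have "ereal 2 < ereal (real N)" using N3 by simp
    hence a: "ereal 2 < chiDC_AB N" using ge by (rule less_le_trans)
    hence b: "ereal 2 < chiC_AB N" using le by (rule less_le_trans)
    show "chiDC_AB N > 2 * chiC_local N \<and> chiC_AB N > chiC_local N + chiC_local N"
      using a b unfolding loc by (simp add: one_add_one)
  qed
  show ?thesis by (intro conjI ph0 T E sum_Emeas W le ge loc last)
qed

end
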